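(* Let $k_0<q$ be positive integers and $\mathbb{F}$ a finite field. Let $\mathcal{S}\subseteq\binom{[q]}{k_0-1}$ be a family of $(k_0-1)$-element subsets of $[q]$ such that any two distinct $S_1,S_2\in\mathcal{S}$ satisfy $|S_1\cap S_2|\le1$. Then there is a black-box transformation with parameters $(k_0-1,\,q+|\mathcal{S}|,\,k_0,\,|\mathcal{S}|,\,\mathbb{F})$ and rate $1-q/(q+|\mathcal{S}|)$, in which $c_j\le|\mathcal{S}|$ for every $j\in[q+|\mathcal{S}|]$.
   Context: A $k$-party $\ell$-LMSSS over $\mathbb{F}$: an $\mathbb{F}$-linear map $\mathsf{Share}:\mathbb{F}^\ell\times\mathbb{F}^e\to\mathbb{F}^{b_1}\times\dots\times\mathbb{F}^{b_k}$ together with an access structure (sets that can linearly recover the secret) and adversary structure (sets whose shares, under uniform randomness, are distributed independently of the secret); information rate $\ell/\sum_jb_j$. Black-box transformation with parameters $(t,k,k_0,\ell,\mathbb{F})$: a $k$-party $\ell$-LMSSS $\mathcal{L}=(\mathsf{Share}_\mathcal{L},\mathsf{Rec}_\mathcal{L})$ over $\mathbb{F}$ with parameters $(e,b_1,\dots,b_k)$ (all $k$ parties together qualified), replication functions $\psi_i:[k_0]\to2^{[k]}$ ($i\in[\ell]$) and conversion functions $\varphi_j:\mathbb{F}^{c_j}\to\mathbb{F}^{b_j}$, $c_j=\sum_{i=1}^\ell|\{v\in[k_0]:j\in\psi_i(v)\}|$, such that for every $(y_i^{(v)})_{i\in[\ell],v\in[k_0]}$ there is $\mathbf{r}$ with $(\varphi_j(\mathbf{Y}(j)))_{j}=\mathsf{Share}_\mathcal{L}((\sum_vy_1^{(v)},\dots,\sum_vy_\ell^{(v)}),\mathbf{r})$,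 where $\mathbf{Y}(j)=(y_i^{(v)})_{i,v:\,j\in\psi_i(v)}$; and for every $T\subseteq[k]$ with $|T|\le t$ and every $i$, $|\bigcup_{j\in T}\{v:j\in\psi_i(v)\}|\le k_0-1$. Its rate is the information rate of $\mathcal{L}$. *)

theory Defs
  imports Complex_Main
begin

text \<open>A vector in F^n is a function nat => 'a vanishing at indices >= n.
  Parties are indexed 0..k-1; [q] is rendered as {0..<q}.
  A share map takes a secret s (in F^l) and randomness r (in F^e) and returns
  Share s r j m = the m-th coordinate (m < b j) of party j's share (j < k).\<close>

definition vec :: "nat \<Rightarrow> (nat \<Rightarrow> 'a::zero) set" where
  "vec n = {v. \<forall>i\<ge>n. v i = 0}"

definition lmsss ::
  "nat \<Rightarrow> nat \<Rightarrow> nat \<Rightarrow> (nat \<Rightarrow> nat) \<Rightarrow>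
   ((nat \<Rightarrow> 'a::field) \<Rightarrow> (nat \<Rightarrow> 'a) \<Rightarrow> nat \<Rightarrow> nat \<Rightarrow> 'a) \<Rightarrow> bool" where
  "lmsss k l e b Share \<longleftrightarrow>
     (\<forall>s\<in>vec l. \<forall>s'\<in>vec l. \<forall>r\<in>vec e. \<forall>r'\<in>vec e. \<forall>j<k. \<forall>m<b j.
        Share (\<lambda>i. s i + s' i) (\<lambda>i. r i + r' i) j m = Share s r j m + Share s' r' j m) \<and>
     (\<forall>c. \<forall>s\<in>vec l. \<forall>r\<in>vec e. \<forall>j<k. \<forall>m<b j.
        Share (\<lambda>i. c * s i) (\<lambda>i. c * r i) j m = c * Share s r j m)"

definition lmsss_qualified ::
  "nat \<Rightarrow> nat \<Rightarrow> (nat \<Rightarrow> nat) \<Rightarrow>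
   ((nat \<Rightarrow> 'a::field) \<Rightarrow> (nat \<Rightarrow> 'a) \<Rightarrow> nat \<Rightarrow> nat \<Rightarrow> 'a) \<Rightarrow> nat set \<Rightarrow> bool" where
  "lmsss_qualified l e b Share A \<longleftrightarrow>
     (\<exists>coef :: nat \<Rightarrow> nat \<Rightarrow> nat \<Rightarrow> 'a. \<forall>s\<in>vec l. \<forall>r\<in>vec e. \<forall>i<l.
        s i = (\<Sum>j\<in>A. \<Sum>m<b j. coef i j m * Share s r j m))"

text \<open>Adversary structure: the view of T under uniform randomness is independent
  of the secret (equal counts of randomness producing each view). Not needed
  by the theorem, recorded for completeness.\<close>
definition lmsss_unqualified ::
  "nat \<Rightarrow> nat \<Rightarrow> (nat \<Rightarrow> nat) \<Rightarrow>
   ((nat \<Rightarrow> 'a::{finite,field}) \<Rightarrow> (nat \<Rightarrow> 'a) \<Rightarrow> nat \<Rightarrow> nat \<Rightarrow> 'a) \<Rightarrow> nat set \<Rightarrow> bool" where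
  "lmsss_unqualified l e b Share T \<longleftrightarrow>
     (\<forall>s\<in>vec l. \<forall>s'\<in>vec l. \<forall>w :: nat \<Rightarrow> nat \<Rightarrow> 'a.
        card {r\<in>vec e. \<forall>j\<in>T. \<forall>m<b j. Share s r j m = w j m}
      = card {r\<in>vec e. \<forall>j\<in>T. \<forall>m<b j. Share s' r j m = w j m})"

definition info_rate :: "nat \<Rightarrow> nat \<Rightarrow> (nat \<Rightarrow> nat) \<Rightarrow> real" where
  "info_rate k l b = real l / real (\<Sum>j<k. b j)"

definition repl_idx :: "nat \<Rightarrow> nat \<Rightarrow> (nat \<Rightarrow> nat \<Rightarrow> nat set) \<Rightarrow> nat \<Rightarrow> (nat \<times> nat) set" where
  "repl_idx l k0 \<psi> j = {(i, v). i < l \<and> v < k0 \<and> j \<in> \<psi> i v}"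

definition c_count :: "nat \<Rightarrow> nat \<Rightarrow> (nat \<Rightarrow> nat \<Rightarrow> nat set) \<Rightarrow> nat \<Rightarrow> nat" where
  "c_count l k0 \<psi> j = card (repl_idx l k0 \<psi> j)"

definition Yview :: "nat \<Rightarrow> nat \<Rightarrow> (nat \<Rightarrow> nat \<Rightarrow> nat set) \<Rightarrow> nat \<Rightarrow> (nat \<times> nat \<Rightarrow> 'a::zero) \<Rightarrow> nat \<times> nat \<Rightarrow> 'a" where
  "Yview l k0 \<psi> j y = (\<lambda>p. if p \<in> repl_idx l k0 \<psi> j then y p else 0)"

definition black_box_transformation ::
  "nat \<Rightarrow> nat \<Rightarrow> nat \<Rightarrow> nat \<Rightarrow> nat \<Rightarrow> (nat \<Rightarrow> nat) \<Rightarrow>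
   ((nat \<Rightarrow> 'a::{finite,field}) \<Rightarrow> (nat \<Rightarrow> 'a) \<Rightarrow> nat \<Rightarrow> nat \<Rightarrow> 'a) \<Rightarrow>
   (nat \<Rightarrow> nat \<Rightarrow> nat set) \<Rightarrow> (nat \<Rightarrow> (nat \<times> nat \<Rightarrow> 'a) \<Rightarrow> nat \<Rightarrow> 'a) \<Rightarrow> bool" where
  "black_box_transformation t k k0 l e b Share \<psi> \<phi> \<longleftrightarrow>
     lmsss k l e b Share \<and>
     lmsss_qualified l e b Share {..<k} \<and>
     (\<forall>i<l. \<forall>v<k0. \<psi> i v \<subseteq> {..<k}) \<and>
     (\<forall>y :: nat \<times> nat \<Rightarrow> 'a. \<exists>r\<in>vec e. \<forall>j<k. \<forall>m<b j.
        \<phi> j (Yview l k0 \<psi> j y) m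
          = Share (\<lambda>i. if i < l then (\<Sum>v<k0. y (i, v)) else 0) r j m) \<and>
     (\<forall>T\<subseteq>{..<k}. card T \<le> t \<longrightarrow>
        (\<forall>i<l. card (\<Union>j\<in>T. {v. v < k0 \<and> j \<in> \<psi> i v}) \<le> k0 - 1))"

end

theory Submission
  imports Defs
begin

theorem mainTheorem14:
  fixes k0 q :: nat and S :: "nat set set"
  assumes "0 < k0" and "k0 < q"
    and "S \<subseteq> {A. A \<subseteq> {..<q} \<and> card A = k0 - 1}"
    and "\<forall>S1\<in>S. \<forall>S2\<in>S. S1 \<noteq> S2 \<longrightarrow> card (S1 \<inter> S2) \<le> 1"
  shows "\<exists>e b (Share :: (nat \<Rightarrow> 'a::{finite,field}) \<Rightarrow> (nat \<Rightarrow> 'a) \<Rightarrow> nat \<Rightarrow> nat \<Rightarrow> 'a) \<psi> \<phi>.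
           black_box_transformation (k0 - 1) (q + card S) k0 (card S) e b Share \<psi> \<phi> \<and>
           info_rate (q + card S) (card S) b = 1 - real q / real (q + card S) \<and>
           (\<forall>j<q + card S. c_count (card S) k0 \<psi> j \<le> card S)"
proof -
  define l where "l = card S"
  have finS: "finite S"
    by (rule finite_subset[OF assms(3)]) (rule finite_subset[of _ "Pow {..<q}"], auto)
  obtain f where f: "bij_betw f {..<l} S"
    using ex_bij_betw_nat_finite[OF finS] unfolding l_def atLeast0LessThan by blast
  have fS: "f i \<in> S" if "i < l" for i using f that by (auto simp: bij_betw_def)
  have fsub: "f i \<subseteq> {..<q}" and fcard: "card (f i) = k0 - 1" if "i < l" for i
    using fS[OF that] assms(3) by auto
  have ffin: "finite (f i)" if "i < l" for i using fsub[OF that] finite_subset by blast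
  have finj: "card (f i \<inter> f i') \<le> 1" if "i < l" "i' < l" "i \<noteq> i'" for i i'
  proof -
    have "f i \<noteq> f i'" using f that by (auto simp: bij_betw_def inj_on_def)
    then show ?thesis using assms(4) fS that by blast
  qed
  define g where "g = (\<lambda>i. SOME h. bij_betw h (f i) {..<k0-1})"
  have gb: "bij_betw (g i) (f i) {..<k0-1}" if "i < l" for i
  proof -
    have "\<exists>h. bij_betw h (f i) {..<k0-1}"
      using ex_bij_betw_finite_nat[OF ffin[OF that]] fcard[OF that]
      unfolding atLeast0LessThan by simp
    then show ?thesis unfolding g_def by (rule someI_ex)
  qed
  have glt: "g i a < k0 - 1" if "i < l" "a \<in> f i" for i a
    using gb[OF that(1)] that(2) by (auto simp: bij_betw_def)
  define \<psi> where "\<psi> = (\<lambda>i v. {j. j < q \<and> j \<in> f i \<and> g i j = v}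
      \<union> {j. q \<le> j \<and> j - q < l \<and> j - q \<noteq> i \<and> (\<exists>a\<in>f i \<inter> f (j - q). g i a = v)}
      \<union> (if v = k0 - 1 then {q + i} else {}))"
  have uniq: "v = v'" if H1: "i < l" and H2: "j \<in> \<psi> i v" and H3: "j \<in> \<psi> i v'" for i j v v'
  proof -
    have "(j < q \<and> j \<in> f i \<and> g i j = v) \<or>
      (q \<le> j \<and> j - q < l \<and> j - q \<noteq> i \<and> (\<exists>a\<in>f i \<inter> f (j - q). g i a = v)) \<or>
      (v = k0 - 1 \<and> j = q + i)"
      using H2 unfolding \<psi>_def by (simp split: if_splits)
    then consider (a) "j < q" "j \<in> f i" "g i j = v" 
      | (b) "q \<le> j" "j - q < l" "j - q \<noteq> i" "\<exists>a\<in>f i \<inter> f (j - q). g i a = v"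
      | (c) "v = k0 - 1" "j = q + i" by blast
    then show ?thesis
    proof cases
      case a then show ?thesis using H3 unfolding \<psi>_def by (auto split: if_splits)
    next
      case b
      then obtain a where a: "a \<in> f i \<inter> f (j - q)" "g i a = v" by blast
      have "j \<notin> {q + i}" using b by auto
      then obtain a' where a': "a' \<in> f i \<inter> f (j - q)" "g i a' = v'"
        using H3 b unfolding \<psi>_def by (auto split: if_splits)
      have "finite (f i \<inter> f (j - q))" using ffin H1 by blast
      then have "a = a'" using finj[OF H1 b(2)] b(3) a a' card_le_Suc0_iff_eq by fastforce
      then show ?thesis using a a' by simp
    next
      case c then show ?thesis using H3 unfolding \<psi>_def by (auto split: if_splits)
    qed
  qed
  define z where "z = (\<lambda>(y :: nat \<times> nat \<Rightarrow> 'a) a. (\<Sum>i<l. if a \<in> f i then y (i, g i a) else 0))"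
  define cross where "cross = (\<lambda>(y :: nat \<times> nat \<Rightarrow> 'a) i.
     (\<Sum>a\<in>f i. \<Sum>i'<l. if i' \<noteq> i \<and> a \<in> f i' then y (i', g i' a) else 0))"
  define \<phi> where "\<phi> = (\<lambda>j (Y :: nat \<times> nat \<Rightarrow> 'a) (m::nat).
     if j < q then z Y j else Y (j - q, k0 - 1) - cross Y (j - q))"
  define Share where "Share = (\<lambda>(s :: nat \<Rightarrow> 'a) (r :: nat \<Rightarrow> 'a) (j::nat) (m::nat).
     if j < q then r j else s (j - q) - (\<Sum>a\<in>f (j - q). r a))"
  define b where "b = (\<lambda>j::nat. 1::nat)"
  have P1: "lmsss (q + l) l q b Share"
    unfolding lmsss_def b_def Share_def
    by (auto simp: sum.distrib algebra_simps sum_distrib_left[symmetric])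
  have P2: "lmsss_qualified l q b Share {..<q + l}"
  proof -
    define coef where "coef = (\<lambda>i j (m::nat). (if j = q + i then 1 else 0) + (if j \<in> f i then (1::'a) else 0))"
    have "s i = (\<Sum>j\<in>{..<q + l}. \<Sum>m<b j. coef i j m * Share s r j m)" if "i < l" for s r i
    proof -
      have "(\<Sum>j\<in>{..<q + l}. \<Sum>m<b j. coef i j m * Share s r j m)
         = (\<Sum>j\<in>{..<q + l}. (if j = q + i then Share s r j 0 else 0) + (if j \<in> f i then Share s r j 0 else 0))"
        unfolding b_def coef_def by (intro sum.cong) (auto simp: algebra_simps)
      also have "\<dots> = Share s r (q + i) 0 + (\<Sum>j\<in>{..<q + l} \<inter> f i. Share s r j 0)"
        using that by (simp add: sum.distrib sum.inter_restrict)
      also have "{..<q + l} \<inter> f i = f i" using fsub[OF that] by auto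
      also have "(\<Sum>j\<in>f i. Share s r j 0) = (\<Sum>j\<in>f i. r j)"
        using fsub[OF that] by (intro sum.cong) (auto simp: Share_def)
      finally show ?thesis by (simp add: Share_def)
    qed
    then show ?thesis unfolding lmsss_qualified_def by blast
  qed
  have P3: "\<forall>i<l. \<forall>v<k0. \<psi> i v \<subseteq> {..<q + l}"
    unfolding \<psi>_def by auto
  have P4: "\<forall>y :: nat \<times> nat \<Rightarrow> 'a. \<exists>r\<in>vec q. \<forall>j<q + l. \<forall>m<b j.
        \<phi> j (Yview l k0 \<psi> j y) m
          = Share (\<lambda>i. if i < l then (\<Sum>v<k0. y (i, v)) else 0) r j m"
  proof
    fix y :: "nat \<times> nat \<Rightarrow> 'a"
    define r where "r = (\<lambda>a. if a < q then z y a else 0)"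
    have iden: "(\<Sum>a\<in>f i. z y a) = (\<Sum>v<k0-1. y (i, v)) + cross y i" if "i < l" for i
    proof -
      have "z y a = y (i, g i a) + (\<Sum>i'<l. if i' \<noteq> i \<and> a \<in> f i' then y (i', g i' a) else 0)"
        if "a \<in> f i" for a
      proof -
        have "z y a = (\<Sum>i'<l. (if i' = i then y (i, g i a) else 0) + (if i' \<noteq> i \<and> a \<in> f i' then y (i', g i' a) else 0))"
          unfolding z_def using that by (intro sum.cong) auto
        then show ?thesis using \<open>i < l\<close> by (simp add: sum.distrib)
      qed
      then have "(\<Sum>a\<in>f i. z y a) = (\<Sum>a\<in>f i. y (i, g i a)) + cross y i"
        unfolding cross_def by (simp add: sum.distrib)
      also have "(\<Sum>a\<in>f i. y (i, g i a)) = (\<Sum>v<k0-1. y (i, v))"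
        using sum.reindex_bij_betw[OF gb[OF that], of "\<lambda>v. y (i, v)"] .
      finally show ?thesis .
    qed
    have split: "(\<Sum>v<k0. y (i, v)) = (\<Sum>v<k0-1. y (i, v)) + y (i, k0 - 1)" for i
    proof -
      have "k0 = Suc (k0 - 1)" using assms(1) by simp
      then have "{..<k0} = insert (k0 - 1) {..<k0-1}" by (metis lessThan_Suc)
      then show ?thesis by (simp add: add.commute)
    qed
    have "r \<in> vec q" unfolding vec_def r_def by auto
    moreover have "\<forall>j<q + l. \<forall>m<b j. \<phi> j (Yview l k0 \<psi> j y) m
          = Share (\<lambda>i. if i < l then (\<Sum>v<k0. y (i, v)) else 0) r j m"
    proof (intro allI impI)
      fix j m assume j: "j < q + l" and m: "m < b j"
      show "\<phi> j (Yview l k0 \<psi> j y) m = Share (\<lambda>i. if i < l then (\<Sum>v<k0. y (i, v)) else 0) r j m"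
      proof (cases "j < q")
        case True
        have "z (Yview l k0 \<psi> j y) j = z y j"
          unfolding z_def
        proof (intro sum.cong refl)
          fix i assume i: "i \<in> {..<l}"
          show "(if j \<in> f i then Yview l k0 \<psi> j y (i, g i j) else 0) = (if j \<in> f i then y (i, g i j) else 0)"
          proof (cases "j \<in> f i")
            case True
            have "(i, g i j) \<in> repl_idx l k0 \<psi> j"
              using i True glt[of i j] \<open>j < q\<close> unfolding repl_idx_def \<psi>_def by auto
            then show ?thesis using True by (simp add: Yview_def)
          qed simp
        qed
        then show ?thesis using True by (simp add: \<phi>_def Share_def r_def)
      next
        case False
        define i where "i = j - q"
        have i: "i < l" and ji: "j = q + i" using False j unfolding i_def by auto
        have "(i, k0 - 1) \<in> repl_idx l k0 \<psi> j"
          using i ji assms(1) unfolding repl_idx_def \<psi>_def by auto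
        then have e1: "Yview l k0 \<psi> j y (i, k0 - 1) = y (i, k0 - 1)" by (simp add: Yview_def)
        have e2: "cross (Yview l k0 \<psi> j y) i = cross y i"
          unfolding cross_def
        proof (intro sum.cong refl)
          fix a i' assume a: "a \<in> f i" and i': "i' \<in> {..<l}"
          show "(if i' \<noteq> i \<and> a \<in> f i' then Yview l k0 \<psi> j y (i', g i' a) else 0)
              = (if i' \<noteq> i \<and> a \<in> f i' then y (i', g i' a) else 0)"
          proof (cases "i' \<noteq> i \<and> a \<in> f i'")
            case True
            have "(i', g i' a) \<in> repl_idx l k0 \<psi> j"
              using i i' a True glt[of i' a] unfolding repl_idx_def \<psi>_def ji by auto
            then show ?thesis using True by (simp add: Yview_def)
          next case False then show ?thesis by (simp only: if_not_P[OF False] if_False)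
          qed
        qed
        have "(\<Sum>a\<in>f i. r a) = (\<Sum>a\<in>f i. z y a)"
          using fsub[OF i] by (intro sum.cong) (auto simp: r_def)
        then show ?thesis
          using e1 e2 iden[OF i] split[of i] i ji
          by (simp add: \<phi>_def Share_def algebra_simps)
      qed
    qed
    ultimately show "\<exists>r\<in>vec q. \<forall>j<q + l. \<forall>m<b j. \<phi> j (Yview l k0 \<psi> j y) m
          = Share (\<lambda>i. if i < l then (\<Sum>v<k0. y (i, v)) else 0) r j m" by blast
  qed
  have P5: "\<forall>T\<subseteq>{..<q + l}. card T \<le> k0 - 1 \<longrightarrow>
        (\<forall>i<l. card (\<Union>j\<in>T. {v. v < k0 \<and> j \<in> \<psi> i v}) \<le> k0 - 1)"
  proof (intro allI impI)
    fix T i assume T: "T \<subseteq> {..<q + l}" "card T \<le> k0 - 1" and i: "i < l"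
    have finT: "finite T" using T(1) finite_subset by blast
    have "card (\<Union>j\<in>T. {v. v < k0 \<and> j \<in> \<psi> i v}) \<le> (\<Sum>j\<in>T. card {v. v < k0 \<and> j \<in> \<psi> i v})"
      by (rule card_UN_le[OF finT])
    also have "\<dots> \<le> (\<Sum>j\<in>T. 1)"
    proof (rule sum_mono)
      fix j assume "j \<in> T"
      have fin: "finite {v. v < k0 \<and> j \<in> \<psi> i v}"
        by (rule finite_subset[of _ "{..<k0}"]) auto
      have "\<forall>a1\<in>{v. v < k0 \<and> j \<in> \<psi> i v}. \<forall>a2\<in>{v. v < k0 \<and> j \<in> \<psi> i v}. a1 = a2"
        using uniq[OF i] by blast
      then show "card {v. v < k0 \<and> j \<in> \<psi> i v} \<le> 1"
        using card_le_Suc0_iff_eq[OF fin] by simp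
    qed
    also have "\<dots> = card T" by simp
    finally show "card (\<Union>j\<in>T. {v. v < k0 \<and> j \<in> \<psi> i v}) \<le> k0 - 1" using T(2) by linarith
  qed
  have P6: "info_rate (q + l) l b = 1 - real q / real (q + l)"
  proof -
    have "real q > 0" using assms by simp
    then show ?thesis unfolding info_rate_def b_def by (simp add: field_simps)
  qed
  have P7: "\<forall>j<q + l. c_count l k0 \<psi> j \<le> l"
  proof (intro allI impI)
    fix j assume "j < q + l"
    have "card (repl_idx l k0 \<psi> j) \<le> card {..<l}"
    proof (rule card_inj_on_le)
      show "inj_on fst (repl_idx l k0 \<psi> j)"
        unfolding inj_on_def repl_idx_def using uniq by auto
      show "fst ` repl_idx l k0 \<psi> j \<subseteq> {..<l}" unfolding repl_idx_def by auto
    qed simp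
    then show "c_count l k0 \<psi> j \<le> l" by (simp add: c_count_def)
  qed
  show ?thesis unfolding l_def[symmetric] black_box_transformation_def
    using P1 P2 P3 P4 P5 P6 P7 by blast
qed
end
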